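(* Let $n\ge 1$, let $\chi$ be an irreducible character of $S_n$, let $1\le k\le n$ and let $A,X^1,\ldots,X^k\in M_n(\mathbb{C})$. Then $$D^k d_{\chi}(A)(X^1,\ldots ,X^k)= \sum_{\sigma \in S_k} \sum_{\alpha \in Q_{k,n}}d_{\chi}\big(A(\alpha ;X^{\sigma(1)},\ldots ,X^{\sigma(k)})\big).$$ In particular, for every $X\in M_n(\mathbb{C})$, $$D^k d_{\chi}(A)(X,\ldots ,X)= k!\sum_{\alpha \in Q_{k,n}}d_{\chi}\big(A(\alpha ;X,\ldots ,X)\big).$$
   Context: For $A=(a_{ij})\in M_n(\mathbb{C})$, $d_\chi(A)=\sum_{\sigma\in S_n}\chi(\sigma)\prod_{i=1}^n a_{i\sigma(i)}$ (the immanant). The $k$-th derivative of $d_\chi$ at $A$ in direction $(X^1,\ldots,X^k)$ is $D^k d_\chi(A)(X^1,\ldots,X^k)=\frac{\partial^k}{\partial t_1\cdots\partial t_k}\big|_{t_1=\cdots=t_k=0} d_\chi(A+t_1X^1+\cdots+t_kX^k)$. $Q_{k,n}$ is the set of strictly increasing maps $\{1,\ldots,k\}\to\{1,\ldots,n\}$. For $\alpha\in Q_{k,n}$ and $Y^1,\ldots,Y^k\in M_n(\mathbb{C})$, $A(\alpha;Y^1,\ldots,Y^k)$ is the $n\times n$ matrix obtained from $A$ by replacing, for each $j=1,\ldots,k$, the $\alpha(j)$-th column of $A$ by the $\alpha(j)$-th column of $Y^j$, all other columns being those of $A$. *)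

theory Defs
  imports Complex_Main "HOL-Analysis.Derivative" "HOL-Combinatorics.Permutations" "Jordan_Normal_Form.Matrix"
begin

text \<open>Conventions: matrices are JNF matrices in carrier_mat n n with 0-based indices
  0..n-1; S_n is the set of permutations of {0..<n}; the directions X^1..X^k are
  indexed 0..k-1 (X 0, ..., X (k-1)); Q_{k,n} consists of strictly increasing lists of
  length k with entries < n.\<close>

definition invariant_subspace :: "nat \<Rightarrow> ((nat \<Rightarrow> nat) \<Rightarrow> complex mat) \<Rightarrow> nat \<Rightarrow> complex vec set \<Rightarrow> bool" where
  "invariant_subspace n \<rho> d W \<longleftrightarrow>
     W \<subseteq> carrier_vec d \<and> 0\<^sub>v d \<in> W \<and>
     (\<forall>v\<in>W. \<forall>w\<in>W. v + w \<in> W) \<and> (\<forall>c. \<forall>v\<in>W. c \<cdot>\<^sub>v v \<in> W) \<and>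
     (\<forall>\<sigma>. \<sigma> permutes {..<n} \<longrightarrow> (\<forall>v\<in>W. \<rho> \<sigma> *\<^sub>v v \<in> W))"

definition is_rep :: "nat \<Rightarrow> ((nat \<Rightarrow> nat) \<Rightarrow> complex mat) \<Rightarrow> nat \<Rightarrow> bool" where
  "is_rep n \<rho> d \<longleftrightarrow>
     (\<forall>\<sigma>. \<sigma> permutes {..<n} \<longrightarrow> \<rho> \<sigma> \<in> carrier_mat d d) \<and>
     \<rho> id = 1\<^sub>m d \<and>
     (\<forall>\<sigma> \<tau>. \<sigma> permutes {..<n} \<longrightarrow> \<tau> permutes {..<n} \<longrightarrow> \<rho> (\<sigma> \<circ> \<tau>) = \<rho> \<sigma> * \<rho> \<tau>)"

definition irreducible_rep :: "nat \<Rightarrow> ((nat \<Rightarrow> nat) \<Rightarrow> complex mat) \<Rightarrow> nat \<Rightarrow> bool" where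
  "irreducible_rep n \<rho> d \<longleftrightarrow> is_rep n \<rho> d \<and> d > 0 \<and>
     (\<forall>W. invariant_subspace n \<rho> d W \<longrightarrow> W = {0\<^sub>v d} \<or> W = carrier_vec d)"

definition mat_trace :: "complex mat \<Rightarrow> complex" where
  "mat_trace M = (\<Sum>i<dim_row M. M $$ (i,i))"

text \<open>Irreducible character of S_n (values on S_n; values outside S_n are irrelevant).\<close>
definition irreducible_character :: "nat \<Rightarrow> ((nat \<Rightarrow> nat) \<Rightarrow> complex) \<Rightarrow> bool" where
  "irreducible_character n chi \<longleftrightarrow>
     (\<exists>\<rho> d. irreducible_rep n \<rho> d \<and> (\<forall>\<sigma>. \<sigma> permutes {..<n} \<longrightarrow> chi \<sigma> = mat_trace (\<rho> \<sigma>)))"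

definition immanant :: "nat \<Rightarrow> ((nat \<Rightarrow> nat) \<Rightarrow> complex) \<Rightarrow> complex mat \<Rightarrow> complex" where
  "immanant n chi A = (\<Sum>\<sigma> | \<sigma> permutes {..<n}. chi \<sigma> * (\<Prod>i<n. A $$ (i, \<sigma> i)))"

definition partial :: "nat \<Rightarrow> ((nat \<Rightarrow> complex) \<Rightarrow> complex) \<Rightarrow> ((nat \<Rightarrow> complex) \<Rightarrow> complex)" where
  "partial j F = (\<lambda>t. deriv (\<lambda>s. F (t(j := s))) (t j))"

text \<open>D^k d_chi(A)(X^1,...,X^k) = d^k/dt_1...dt_k at t = 0 of d_chi(A + t_1 X^1 + ... + t_k X^k).\<close>
definition Dk_immanant :: "nat \<Rightarrow> ((nat \<Rightarrow> nat) \<Rightarrow> complex) \<Rightarrow> nat \<Rightarrow> complex mat \<Rightarrow> (nat \<Rightarrow> complex mat) \<Rightarrow> complex" where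
  "Dk_immanant n chi k A X =
     foldr partial [0..<k]
       (\<lambda>t. immanant n chi (mat n n (\<lambda>(i,j). A $$ (i,j) + (\<Sum>l<k. t l * X l $$ (i,j)))))
       (\<lambda>_. 0)"

definition Qkn :: "nat \<Rightarrow> nat \<Rightarrow> nat list set" where
  "Qkn k n = {\<alpha>. length \<alpha> = k \<and> sorted_wrt (<) \<alpha> \<and> set \<alpha> \<subseteq> {..<n}}"

text \<open>A(alpha; Y_0,...,Y_{k-1}): column alpha!j of A is replaced by column alpha!j of Y j.\<close>
definition replace_cols :: "nat \<Rightarrow> complex mat \<Rightarrow> nat list \<Rightarrow> (nat \<Rightarrow> complex mat) \<Rightarrow> complex mat" where
  "replace_cols n A \<alpha> Y = mat n n (\<lambda>(i,c).
     if c \<in> set \<alpha> then Y (THE j. j < length \<alpha> \<and> \<alpha> ! j = c) $$ (i,c) else A $$ (i,c))"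

end

theory Submission
  imports Defs
begin


definition Inj :: "nat set \<Rightarrow> nat set \<Rightarrow> (nat \<Rightarrow> nat) set" where
  "Inj S I = {g. g \<in> S \<rightarrow>\<^sub>E I \<and> inj_on g S}"

lemma DERIV_prod_aff:
  fixes a b :: "nat \<Rightarrow> complex"
  assumes "finite J"
  shows "((\<lambda>s. \<Prod>i\<in>J. a i + s * b i) has_field_derivative
           (\<Sum>i\<in>J. b i * (\<Prod>j\<in>J-{i}. a j + x * b j))) (at x)"
  using assms
proof (induction J rule: finite_induct)
  case empty
  then show ?case by simp
next
  case (insert i J)
  have d1: "((\<lambda>s. a i + s * b i) has_field_derivative b i) (at x)"
    by (auto intro!: derivative_eq_intros)
  have d: "((\<lambda>s. (a i + s * b i) * (\<Prod>j\<in>J. a j + s * b j)) has_field_derivative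
     b i * (\<Prod>j\<in>J. a j + x * b j) + (\<Sum>i\<in>J. b i * (\<Prod>j\<in>J-{i}. a j + x * b j)) * (a i + x * b i)) (at x)"
    by (rule DERIV_mult[OF d1 insert.IH])
  have eq: "(\<Sum>l\<in>insert i J. b l * (\<Prod>j\<in>insert i J-{l}. a j + x * b j)) =
     b i * (\<Prod>j\<in>J. a j + x * b j) + (\<Sum>i\<in>J. b i * (\<Prod>j\<in>J-{i}. a j + x * b j)) * (a i + x * b i)"
  proof -
    have "(\<Sum>l\<in>J. b l * (\<Prod>j\<in>insert i J-{l}. a j + x * b j)) =
          (\<Sum>l\<in>J. b l * (\<Prod>j\<in>J-{l}. a j + x * b j) * (a i + x * b i))"
    proof (rule sum.cong[OF refl])
      fix l assume "l \<in> J"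
      then have "insert i J - {l} = insert i (J - {l})" using insert.hyps by auto
      then show "b l * (\<Prod>j\<in>insert i J-{l}. a j + x * b j) = b l * (\<Prod>j\<in>J-{l}. a j + x * b j) * (a i + x * b i)"
        using insert.hyps by (simp add: mult_ac)
    qed
    moreover have "insert i J - {i} = J" using insert.hyps by auto
    ultimately show ?thesis using insert.hyps by (simp add: sum_distrib_right)
  qed
  show ?case unfolding eq using d insert.hyps by simp
qed

lemma finite_Inj: "finite S \<Longrightarrow> finite I \<Longrightarrow> finite (Inj S I)"
  unfolding Inj_def by (rule finite_subset[of _ "S \<rightarrow>\<^sub>E I"]) (auto intro: finite_PiE)

lemma Inj_step:
  fixes q :: "nat \<Rightarrow> nat \<Rightarrow> complex" and L :: "nat \<Rightarrow> complex"
  assumes "m < k" "finite I"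
  shows "(\<Sum>g\<in>Inj {Suc m..<k} I. (\<Prod>l\<in>{Suc m..<k}. q (g l) l) *
            (\<Sum>i\<in>I - g`{Suc m..<k}. q i m * (\<Prod>j\<in>(I - g`{Suc m..<k})-{i}. L j)))
       = (\<Sum>g\<in>Inj {m..<k} I. (\<Prod>l\<in>{m..<k}. q (g l) l) * (\<Prod>i\<in>I - g`{m..<k}. L i))"
proof -
  have "(\<Sum>g\<in>Inj {Suc m..<k} I. (\<Prod>l\<in>{Suc m..<k}. q (g l) l) *
            (\<Sum>i\<in>I - g`{Suc m..<k}. q i m * (\<Prod>j\<in>(I - g`{Suc m..<k})-{i}. L j)))
     = (\<Sum>g\<in>Inj {Suc m..<k} I. \<Sum>i\<in>I - g`{Suc m..<k}. (\<Prod>l\<in>{Suc m..<k}. q (g l) l) *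
            (q i m * (\<Prod>j\<in>(I - g`{Suc m..<k})-{i}. L j)))"
    by (simp add: sum_distrib_left)
  also have "\<dots> = (\<Sum>(g,i)\<in>Sigma (Inj {Suc m..<k} I) (\<lambda>g. I - g`{Suc m..<k}). (\<Prod>l\<in>{Suc m..<k}. q (g l) l) *
            (q i m * (\<Prod>j\<in>(I - g`{Suc m..<k})-{i}. L j)))"
    by (rule sum.Sigma) (auto simp: finite_Inj assms)
  also have "\<dots> = (\<Sum>g\<in>Inj {m..<k} I. (\<Prod>l\<in>{m..<k}. q (g l) l) * (\<Prod>i\<in>I - g`{m..<k}. L i))"
  proof (rule sum.reindex_bij_witness[where j = "\<lambda>(g,i). g(m:=i)" and i = "\<lambda>g. (g(m:=undefined), g m)"])
    fix a assume a: "a \<in> Sigma (Inj {Suc m..<k} I) (\<lambda>g. I - g`{Suc m..<k})"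
    obtain g i where gi: "a = (g,i)" by force
    from a gi have g: "g \<in> {Suc m..<k} \<rightarrow>\<^sub>E I" "inj_on g {Suc m..<k}" and i: "i \<in> I" "i \<notin> g`{Suc m..<k}"
      by (auto simp: Inj_def)
    have gm: "g m = undefined" using g(1) by (auto simp: PiE_def extensional_def)
    show "(case (case a of (g, i) \<Rightarrow> g(m := i)) of g \<Rightarrow> (g(m := undefined), g m)) = a"
      using gi gm by auto
    have dom: "{m..<k} = insert m {Suc m..<k}" using assms(1) by auto
    have img: "(g(m:=i)) ` {Suc m..<k} = g ` {Suc m..<k}" by auto
    show "(case a of (g, i) \<Rightarrow> g(m := i)) \<in> Inj {m..<k} I"
      using g i assms(1) unfolding gi Inj_def dom
      by (auto simp: PiE_def extensional_def img inj_on_def)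
    have pr: "(\<Prod>l\<in>{m..<k}. q ((g(m:=i)) l) l) = q i m * (\<Prod>l\<in>{Suc m..<k}. q (g l) l)"
      unfolding dom by (subst prod.insert) (auto intro!: prod.cong)
    have st: "I - (g(m:=i)) ` {m..<k} = (I - g`{Suc m..<k}) - {i}"
      unfolding dom by (auto simp: img)
    show "(case (case a of (g, i) \<Rightarrow> g(m := i)) of g \<Rightarrow> (\<Prod>l\<in>{m..<k}. q (g l) l) * (\<Prod>i\<in>I - g ` {m..<k}. L i)) =
         (case a of (g, i) \<Rightarrow> (\<Prod>l\<in>{Suc m..<k}. q (g l) l) * (q i m * (\<Prod>j\<in>I - g ` {Suc m..<k} - {i}. L j)))"
      unfolding gi by (simp only: case_prod_conv pr st) (simp add: mult_ac)
  next
    fix b assume b: "b \<in> Inj {m..<k} I"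
    then have g: "b \<in> {m..<k} \<rightarrow>\<^sub>E I" "inj_on b {m..<k}" by (auto simp: Inj_def)
    show "(case (b(m := undefined), b m) of (g, i) \<Rightarrow> g(m := i)) = b" by simp
    have dom: "{m..<k} = insert m {Suc m..<k}" using assms(1) by auto
    have img: "(b(m:=undefined)) ` {Suc m..<k} = b ` {Suc m..<k}" by auto
    show "(b(m := undefined), b m) \<in> Sigma (Inj {Suc m..<k} I) (\<lambda>g. I - g ` {Suc m..<k})"
      using g assms(1) unfolding Inj_def dom img
      by (auto simp: PiE_def extensional_def inj_on_def)
  qed
  finally show ?thesis .
qed



lemma foldr_partial:
  fixes w :: "'p \<Rightarrow> complex" and p :: "'p \<Rightarrow> nat \<Rightarrow> complex" and q :: "'p \<Rightarrow> nat \<Rightarrow> nat \<Rightarrow> complex"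
  assumes fP: "finite P" and fI: "finite I" and mk: "m \<le> k"
  shows "foldr partial [m..<k] (\<lambda>t. \<Sum>\<pi>\<in>P. w \<pi> * (\<Prod>i\<in>I. p \<pi> i + (\<Sum>l<k. t l * q \<pi> i l)))
     = (\<lambda>t. \<Sum>\<pi>\<in>P. w \<pi> * (\<Sum>g\<in>Inj {m..<k} I. (\<Prod>l\<in>{m..<k}. q \<pi> (g l) l) *
            (\<Prod>i\<in>I - g`{m..<k}. p \<pi> i + (\<Sum>l<k. t l * q \<pi> i l))))"
  using mk
proof (induction m rule: inc_induct)
  case base
  have "Inj {k..<k} I = {\<lambda>x. undefined}" by (simp add: Inj_def)
  then show ?case by simp
next
  case (step m)
  define G where "G = (\<lambda>t. \<Sum>\<pi>\<in>P. w \<pi> * (\<Sum>g\<in>Inj {Suc m..<k} I. (\<Prod>l\<in>{Suc m..<k}. q \<pi> (g l) l) *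
            (\<Prod>i\<in>I - g`{Suc m..<k}. p \<pi> i + (\<Sum>l<k. t l * q \<pi> i l))))"
  have "foldr partial [m..<k] (\<lambda>t. \<Sum>\<pi>\<in>P. w \<pi> * (\<Prod>i\<in>I. p \<pi> i + (\<Sum>l<k. t l * q \<pi> i l))) = partial m G"
    using step(2) step.IH by (simp add: upt_conv_Cons G_def)
  also have "partial m G = (\<lambda>t. \<Sum>\<pi>\<in>P. w \<pi> * (\<Sum>g\<in>Inj {m..<k} I. (\<Prod>l\<in>{m..<k}. q \<pi> (g l) l) *
            (\<Prod>i\<in>I - g`{m..<k}. p \<pi> i + (\<Sum>l<k. t l * q \<pi> i l))))"
  proof (rule ext)
    fix t :: "nat \<Rightarrow> complex"
    define a where "a = (\<lambda>\<pi> i. p \<pi> i + (\<Sum>l\<in>{..<k}-{m}. t l * q \<pi> i l))"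
    have La: "p \<pi> i + (\<Sum>l<k. (t(m:=s)) l * q \<pi> i l) = a \<pi> i + s * q \<pi> i m" for \<pi> i s
    proof -
      have "(\<Sum>l<k. (t(m:=s)) l * q \<pi> i l) = (t(m:=s)) m * q \<pi> i m + (\<Sum>l\<in>{..<k}-{m}. (t(m:=s)) l * q \<pi> i l)"
        by (rule sum.remove) (use step(2) in auto)
      also have "(\<Sum>l\<in>{..<k}-{m}. (t(m:=s)) l * q \<pi> i l) = (\<Sum>l\<in>{..<k}-{m}. t l * q \<pi> i l)"
        by (rule sum.cong) auto
      finally show ?thesis by (simp add: a_def)
    qed
    have Lt: "a \<pi> i + t m * q \<pi> i m = p \<pi> i + (\<Sum>l<k. t l * q \<pi> i l)" for \<pi> i
      using La[of \<pi> i "t m"] by simp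
    have "((\<lambda>s. G (t(m:=s))) has_field_derivative
       (\<Sum>\<pi>\<in>P. w \<pi> * (\<Sum>g\<in>Inj {Suc m..<k} I. (\<Prod>l\<in>{Suc m..<k}. q \<pi> (g l) l) *
            (\<Sum>i\<in>I - g`{Suc m..<k}. q \<pi> i m * (\<Prod>j\<in>(I - g`{Suc m..<k})-{i}. a \<pi> j + t m * q \<pi> j m))))) (at (t m))"
      unfolding G_def La
      by (intro DERIV_sum DERIV_cmult DERIV_prod_aff) (auto simp: fI)
    then have "partial m G t = (\<Sum>\<pi>\<in>P. w \<pi> * (\<Sum>g\<in>Inj {Suc m..<k} I. (\<Prod>l\<in>{Suc m..<k}. q \<pi> (g l) l) *
            (\<Sum>i\<in>I - g`{Suc m..<k}. q \<pi> i m * (\<Prod>j\<in>(I - g`{Suc m..<k})-{i}. p \<pi> j + (\<Sum>l<k. t l * q \<pi> j l)))))"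
      unfolding partial_def Lt by (rule DERIV_imp_deriv)
    also have "\<dots> = (\<Sum>\<pi>\<in>P. w \<pi> * (\<Sum>g\<in>Inj {m..<k} I. (\<Prod>l\<in>{m..<k}. q \<pi> (g l) l) *
            (\<Prod>i\<in>I - g`{m..<k}. p \<pi> i + (\<Sum>l<k. t l * q \<pi> i l))))"
      by (rule sum.cong[OF refl], subst Inj_step[OF step(2) fI]) simp
    finally show "partial m G t = \<dots>" .
  qed
  finally show ?case .
qed



lemma the_idx: "distinct xs \<Longrightarrow> j < length xs \<Longrightarrow> (THE j'. j' < length xs \<and> xs ! j' = xs ! j) = j"
  by (rule the_equality) (auto simp: nth_eq_iff_index_eq)

lemma the_idx2:
  assumes "distinct xs" "x \<in> set xs"
  shows "(THE j. j < length xs \<and> xs!j = x) < length xs \<and> xs ! (THE j. j < length xs \<and> xs!j = x) = x"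
proof -
  obtain j where j: "j < length xs" "xs ! j = x" using assms(2) by (auto simp: in_set_conv_nth)
  show ?thesis using the_idx[OF assms(1) j(1)] j by simp
qed

definition toInj :: "(nat\<Rightarrow>nat) \<Rightarrow> nat \<Rightarrow> (nat\<Rightarrow>nat) \<times> nat list \<Rightarrow> (nat \<Rightarrow> nat)" where
  "toInj \<pi> k = (\<lambda>(\<sigma>,\<alpha>). (\<lambda>l. if l < k then Hilbert_Choice.inv \<pi> (\<alpha> ! Hilbert_Choice.inv \<sigma> l) else undefined))"

definition ofInj_a :: "(nat\<Rightarrow>nat) \<Rightarrow> nat \<Rightarrow> (nat\<Rightarrow>nat) \<Rightarrow> nat list" where
  "ofInj_a \<pi> k g = sorted_list_of_set ((\<lambda>l. \<pi> (g l)) ` {0..<k})"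

definition ofInj_t :: "(nat\<Rightarrow>nat) \<Rightarrow> nat \<Rightarrow> (nat\<Rightarrow>nat) \<Rightarrow> nat \<Rightarrow> nat" where
  "ofInj_t \<pi> k g = (\<lambda>l. if l < k then (THE j. j < length (ofInj_a \<pi> k g) \<and> ofInj_a \<pi> k g ! j = \<pi> (g l)) else l)"

definition ofInj :: "(nat\<Rightarrow>nat) \<Rightarrow> nat \<Rightarrow> (nat\<Rightarrow>nat) \<Rightarrow> (nat\<Rightarrow>nat) \<times> nat list" where
  "ofInj \<pi> k g = (Hilbert_Choice.inv (ofInj_t \<pi> k g), ofInj_a \<pi> k g)"

lemma Qkn_props: "\<alpha> \<in> Qkn k n \<Longrightarrow> length \<alpha> = k \<and> distinct \<alpha> \<and> set \<alpha> \<subseteq> {..<n} \<and> sorted \<alpha>"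
  by (auto simp: Qkn_def strict_sorted_iff)

lemma perm_facts:
  assumes "\<sigma> permutes {..<k}"
  shows "\<And>l. l < k \<Longrightarrow> Hilbert_Choice.inv \<sigma> l < k" "\<And>l. \<sigma> (Hilbert_Choice.inv \<sigma> l) = l" "\<And>l. Hilbert_Choice.inv \<sigma> (\<sigma> l) = l"
    "\<And>l. \<not> l < k \<Longrightarrow> Hilbert_Choice.inv \<sigma> l = l"
proof -
  show "\<And>l. l < k \<Longrightarrow> Hilbert_Choice.inv \<sigma> l < k" using permutes_in_image[OF permutes_inv[OF assms]] by auto
  show "\<And>l. \<sigma> (Hilbert_Choice.inv \<sigma> l) = l" "\<And>l. Hilbert_Choice.inv \<sigma> (\<sigma> l) = l" using permutes_inverses[OF assms] by auto
  show "\<And>l. \<not> l < k \<Longrightarrow> Hilbert_Choice.inv \<sigma> l = l" using permutes_not_in[OF permutes_inv[OF assms]] by auto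
qed

lemma toInj_in:
  assumes \<pi>: "\<pi> permutes {..<n}" and \<sigma>: "\<sigma> permutes {..<k}" and \<alpha>: "\<alpha> \<in> Qkn k n"
  shows "toInj \<pi> k (\<sigma>,\<alpha>) \<in> Inj {0..<k} {..<n}"
proof -
  note Q = Qkn_props[OF \<alpha>] and P = perm_facts[OF \<sigma>] and Pi = perm_facts[OF \<pi>]
  have 1: "Hilbert_Choice.inv \<pi> (\<alpha> ! Hilbert_Choice.inv \<sigma> l) < n" if "l < k" for l
  proof -
    have "\<alpha> ! Hilbert_Choice.inv \<sigma> l \<in> set \<alpha>" using P(1)[OF that] Q by (intro nth_mem) auto
    then show ?thesis using Q Pi(1) by auto
  qed
  have 2: "inj_on (\<lambda>l. Hilbert_Choice.inv \<pi> (\<alpha> ! Hilbert_Choice.inv \<sigma> l)) {0..<k}"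
  proof (rule inj_onI)
    fix x y assume xy: "x \<in> {0..<k}" "y \<in> {0..<k}" "Hilbert_Choice.inv \<pi> (\<alpha> ! Hilbert_Choice.inv \<sigma> x) = Hilbert_Choice.inv \<pi> (\<alpha> ! Hilbert_Choice.inv \<sigma> y)"
    then have "\<pi> (Hilbert_Choice.inv \<pi> (\<alpha> ! Hilbert_Choice.inv \<sigma> x)) = \<pi> (Hilbert_Choice.inv \<pi> (\<alpha> ! Hilbert_Choice.inv \<sigma> y))" by simp
    then have "\<alpha> ! Hilbert_Choice.inv \<sigma> x = \<alpha> ! Hilbert_Choice.inv \<sigma> y" using Pi(2) by simp
    then have "Hilbert_Choice.inv \<sigma> x = Hilbert_Choice.inv \<sigma> y" using Q P(1) xy by (simp add: nth_eq_iff_index_eq)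
    then show "x = y" by (metis P(2))
  qed
  have 3: "inj_on (\<lambda>l. if l < k then Hilbert_Choice.inv \<pi> (\<alpha> ! Hilbert_Choice.inv \<sigma> l) else undefined) {0..<k}"
    using 2 by (rule inj_on_cong[THEN iffD1, rotated]) auto
  show ?thesis unfolding toInj_def Inj_def using 1 3 by (auto simp: PiE_def extensional_def)
qed

lemma ofInj_props:
  assumes \<pi>: "\<pi> permutes {..<n}" and g: "g \<in> Inj {0..<k} {..<n}"
  shows "ofInj_a \<pi> k g \<in> Qkn k n" "set (ofInj_a \<pi> k g) = (\<lambda>l. \<pi> (g l)) ` {0..<k}"
    "ofInj_t \<pi> k g permutes {..<k}"
    "\<And>l. l < k \<Longrightarrow> ofInj_a \<pi> k g ! ofInj_t \<pi> k g l = \<pi> (g l)"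
proof -
  note Pi = perm_facts[OF \<pi>]
  from g have gP: "g \<in> {0..<k} \<rightarrow>\<^sub>E {..<n}" and gi: "inj_on g {0..<k}" by (auto simp: Inj_def)
  have inj: "inj_on (\<lambda>l. \<pi> (g l)) {0..<k}"
    using gi by (auto simp: inj_on_def dest: arg_cong[where f="Hilbert_Choice.inv \<pi>"] simp: Pi(3))
  let ?a = "ofInj_a \<pi> k g"
  show st: "set ?a = (\<lambda>l. \<pi> (g l)) ` {0..<k}" by (simp add: ofInj_a_def)
  have len: "length ?a = k" unfolding ofInj_a_def using card_image[OF inj] by simp
  have dist: "distinct ?a" by (simp add: ofInj_a_def)
  have srt: "sorted ?a" by (simp add: ofInj_a_def)
  have sub: "set ?a \<subseteq> {..<n}" unfolding st using gP permutes_in_image[OF \<pi>] by auto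
  show "?a \<in> Qkn k n" using len dist srt sub by (simp add: Qkn_def strict_sorted_iff)
  have mem: "\<pi> (g l) \<in> set ?a" if "l < k" for l using that st by auto
  have T: "ofInj_t \<pi> k g l < k \<and> ?a ! ofInj_t \<pi> k g l = \<pi> (g l)" if "l < k" for l
    using the_idx2[OF dist mem[OF that]] that len by (simp add: ofInj_t_def)
  then show "\<And>l. l < k \<Longrightarrow> ?a ! ofInj_t \<pi> k g l = \<pi> (g l)" by blast
  have ti: "inj_on (ofInj_t \<pi> k g) {..<k}"
  proof (rule inj_onI)
    fix x y assume "x \<in> {..<k}" "y \<in> {..<k}" "ofInj_t \<pi> k g x = ofInj_t \<pi> k g y"
    then have "\<pi> (g x) = \<pi> (g y)" using T by (metis lessThan_iff)
    then show "x = y" using inj \<open>x \<in> {..<k}\<close> \<open>y \<in> {..<k}\<close> by (auto simp: inj_on_def)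
  qed
  have "ofInj_t \<pi> k g ` {..<k} = {..<k}"
    by (rule endo_inj_surj) (use T ti in auto)
  then have "bij_betw (ofInj_t \<pi> k g) {..<k} {..<k}" using ti by (simp add: bij_betw_def)
  then show "ofInj_t \<pi> k g permutes {..<k}"
    by (rule bij_imp_permutes) (simp add: ofInj_t_def)
qed

lemma toInj_ofInj:
  assumes \<pi>: "\<pi> permutes {..<n}" and g: "g \<in> Inj {0..<k} {..<n}"
  shows "toInj \<pi> k (ofInj \<pi> k g) = g"
proof (rule ext)
  fix l
  note O = ofInj_props[OF assms]
  have ii: "Hilbert_Choice.inv (Hilbert_Choice.inv (ofInj_t \<pi> k g)) = ofInj_t \<pi> k g"
    by (rule permutes_inv_inv[OF O(3)])
  show "toInj \<pi> k (ofInj \<pi> k g) l = g l"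
  proof (cases "l < k")
    case True
    then show ?thesis using O(4)[OF True] perm_facts(3)[OF \<pi>] by (simp add: toInj_def ofInj_def ii)
  next
    case False
    then have "g l = undefined" using g by (auto simp: Inj_def PiE_def extensional_def)
    then show ?thesis using False by (simp add: toInj_def ofInj_def)
  qed
qed

lemma ofInj_toInj:
  assumes \<pi>: "\<pi> permutes {..<n}" and \<sigma>: "\<sigma> permutes {..<k}" and \<alpha>: "\<alpha> \<in> Qkn k n"
  shows "ofInj \<pi> k (toInj \<pi> k (\<sigma>,\<alpha>)) = (\<sigma>,\<alpha>)"
proof -
  note Q = Qkn_props[OF \<alpha>] and P = perm_facts[OF \<sigma>] and Pi = perm_facts[OF \<pi>]
  let ?g = "toInj \<pi> k (\<sigma>,\<alpha>)"
  have gl: "\<pi> (?g l) = \<alpha> ! Hilbert_Choice.inv \<sigma> l" if "l<k" for l using that by (simp add: toInj_def Pi(2))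
  have img: "(\<lambda>l. \<pi> (?g l)) ` {0..<k} = set \<alpha>"
  proof -
    have "(\<lambda>l. \<pi> (?g l)) ` {0..<k} = (\<lambda>l. \<alpha> ! Hilbert_Choice.inv \<sigma> l) ` {..<k}"
      by (rule image_cong) (auto simp: gl)
    also have "\<dots> = (\<lambda>j. \<alpha> ! j) ` (Hilbert_Choice.inv \<sigma> ` {..<k})" by (simp add: image_image)
    also have "Hilbert_Choice.inv \<sigma> ` {..<k} = {..<k}" by (rule permutes_image[OF permutes_inv[OF \<sigma>]])
    also have "(\<lambda>j. \<alpha> ! j) ` {..<k} = set \<alpha>" using Q by (auto simp: in_set_conv_nth image_iff)
    finally show ?thesis .
  qed
  have a: "ofInj_a \<pi> k ?g = \<alpha>" unfolding ofInj_a_def img using Q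
    by (simp add: sorted_list_of_set.idem_if_sorted_distinct)
  have t: "ofInj_t \<pi> k ?g = Hilbert_Choice.inv \<sigma>"
  proof (rule ext)
    fix l show "ofInj_t \<pi> k ?g l = Hilbert_Choice.inv \<sigma> l"
    proof (cases "l<k")
      case True
      then show ?thesis unfolding ofInj_t_def a
        using gl[OF True] the_idx[of \<alpha> "Hilbert_Choice.inv \<sigma> l"] P(1)[OF True] Q by simp
    next
      case False then show ?thesis using P(4) by (simp add: ofInj_t_def)
    qed
  qed
  show ?thesis by (simp add: ofInj_def a t permutes_inv_inv[OF \<sigma>])
qed

lemma pair_eq:
  assumes \<pi>: "\<pi> permutes {..<n}" and \<sigma>: "\<sigma> permutes {..<k}" and \<alpha>: "\<alpha> \<in> Qkn k n"
  shows "(\<Prod>i<n. replace_cols n A \<alpha> (\<lambda>j. X (\<sigma> j)) $$ (i, \<pi> i)) =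
    (\<Prod>l\<in>{0..<k}. X l $$ (toInj \<pi> k (\<sigma>,\<alpha>) l, \<pi> (toInj \<pi> k (\<sigma>,\<alpha>) l))) *
    (\<Prod>i\<in>{..<n} - toInj \<pi> k (\<sigma>,\<alpha>) ` {0..<k}. A $$ (i, \<pi> i))"
proof -
  note Q = Qkn_props[OF \<alpha>] and P = perm_facts[OF \<sigma>] and Pi = perm_facts[OF \<pi>]
  let ?g = "toInj \<pi> k (\<sigma>,\<alpha>)"
  let ?R = "?g ` {0..<k}"
  let ?f = "\<lambda>i. replace_cols n A \<alpha> (\<lambda>j. X (\<sigma> j)) $$ (i, \<pi> i)"
  have gin: "?g \<in> Inj {0..<k} {..<n}" by (rule toInj_in[OF \<pi> \<sigma> \<alpha>])
  have gl: "?g l = Hilbert_Choice.inv \<pi> (\<alpha> ! Hilbert_Choice.inv \<sigma> l)" "\<pi> (?g l) = \<alpha> ! Hilbert_Choice.inv \<sigma> l"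
    if "l<k" for l using that by (simp_all add: toInj_def Pi(2))
  have Rsub: "?R \<subseteq> {..<n}" using gin by (auto simp: Inj_def PiE_def)
  have pin: "\<pi> i < n" if "i < n" for i using permutes_in_image[OF \<pi>] that by auto
  have mem: "i \<in> ?R \<longleftrightarrow> \<pi> i \<in> set \<alpha>" if "i < n" for i
  proof
    assume "i \<in> ?R"
    then obtain l where l: "l < k" "i = ?g l" by auto
    then show "\<pi> i \<in> set \<alpha>" using gl(2)[OF l(1)] P(1)[OF l(1)] Q by auto
  next
    assume "\<pi> i \<in> set \<alpha>"
    then obtain j where j: "j < k" "\<pi> i = \<alpha> ! j" using Q by (auto simp: in_set_conv_nth)
    have sj: "\<sigma> j < k" using permutes_in_image[OF \<sigma>] j(1) by auto
    have "?g (\<sigma> j) = i" using gl(1)[OF sj] j P(3) Pi(3) by metis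
    then show "i \<in> ?R" using sj by force
  qed
  have ent: "?f i = (if \<pi> i \<in> set \<alpha> then X (\<sigma> (THE j. j < length \<alpha> \<and> \<alpha> ! j = \<pi> i)) $$ (i, \<pi> i) else A $$ (i, \<pi> i))"
    if "i < n" for i using that pin[OF that] by (simp add: replace_cols_def)
  have "(\<Prod>i<n. ?f i) = prod ?f ?R * prod ?f ({..<n} - ?R)"
    by (simp add: prod.subset_diff[OF Rsub] mult.commute)
  also have "prod ?f ({..<n} - ?R) = (\<Prod>i\<in>{..<n} - ?R. A $$ (i, \<pi> i))"
    by (rule prod.cong[OF refl]) (use ent mem in auto)
  also have "prod ?f ?R = (\<Prod>l\<in>{0..<k}. ?f (?g l))"
    using prod.reindex[of ?g "{0..<k}" ?f] gin by (simp add: Inj_def)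
  also have "\<dots> = (\<Prod>l\<in>{0..<k}. X l $$ (?g l, \<pi> (?g l)))"
  proof (rule prod.cong[OF refl])
    fix l assume "l \<in> {0..<k}"
    then have l: "l < k" by simp
    have gn: "?g l < n" using Rsub l by (auto simp: image_subset_iff)
    have "\<pi> (?g l) \<in> set \<alpha>" using mem[OF gn] l by auto
    moreover have "(THE j. j < length \<alpha> \<and> \<alpha> ! j = \<pi> (?g l)) = Hilbert_Choice.inv \<sigma> l"
      unfolding gl(2)[OF l] by (rule the_idx) (use Q P(1)[OF l] in auto)
    ultimately show "?f (?g l) = X l $$ (?g l, \<pi> (?g l))" using ent[OF gn] P(2) by simp
  qed
  finally show ?thesis .
qed

lemma sum_pi:
  assumes \<pi>: "\<pi> permutes {..<n}"
  shows "(\<Sum>g\<in>Inj {0..<k} {..<n}. (\<Prod>l\<in>{0..<k}. X l $$ (g l, \<pi> (g l))) * (\<Prod>i\<in>{..<n} - g`{0..<k}. A $$ (i, \<pi> i)))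
     = (\<Sum>\<sigma> | \<sigma> permutes {..<k}. \<Sum>\<alpha>\<in>Qkn k n. \<Prod>i<n. replace_cols n A \<alpha> (\<lambda>j. X (\<sigma> j)) $$ (i, \<pi> i))"
proof -
  have "(\<Sum>\<sigma> | \<sigma> permutes {..<k}. \<Sum>\<alpha>\<in>Qkn k n. \<Prod>i<n. replace_cols n A \<alpha> (\<lambda>j. X (\<sigma> j)) $$ (i, \<pi> i))
    = (\<Sum>(\<sigma>,\<alpha>) \<in> {\<sigma>. \<sigma> permutes {..<k}} \<times> Qkn k n. \<Prod>i<n. replace_cols n A \<alpha> (\<lambda>j. X (\<sigma> j)) $$ (i, \<pi> i))"
    by (rule sum.cartesian_product)
  also have "\<dots> = (\<Sum>g\<in>Inj {0..<k} {..<n}. (\<Prod>l\<in>{0..<k}. X l $$ (g l, \<pi> (g l))) * (\<Prod>i\<in>{..<n} - g`{0..<k}. A $$ (i, \<pi> i)))"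
  proof (rule sum.reindex_bij_witness[where j="toInj \<pi> k" and i="ofInj \<pi> k"])
    fix a assume "a \<in> {\<sigma>. \<sigma> permutes {..<k}} \<times> Qkn k n"
    then obtain \<sigma> \<alpha> where a: "a = (\<sigma>,\<alpha>)" "\<sigma> permutes {..<k}" "\<alpha> \<in> Qkn k n" by auto
    show "ofInj \<pi> k (toInj \<pi> k a) = a" using ofInj_toInj[OF \<pi> a(2,3)] a(1) by simp
    show "toInj \<pi> k a \<in> Inj {0..<k} {..<n}" using toInj_in[OF \<pi> a(2,3)] a(1) by simp
    show "(\<Prod>l\<in>{0..<k}. X l $$ (toInj \<pi> k a l, \<pi> (toInj \<pi> k a l))) *
          (\<Prod>i\<in>{..<n} - toInj \<pi> k a ` {0..<k}. A $$ (i, \<pi> i)) =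
          (case a of (\<sigma>, \<alpha>) \<Rightarrow> \<Prod>i<n. replace_cols n A \<alpha> (\<lambda>j. X (\<sigma> j)) $$ (i, \<pi> i))"
      using pair_eq[OF \<pi> a(2,3)] a(1) by simp
  next
    fix b assume b: "b \<in> Inj {0..<k} {..<n}"
    show "toInj \<pi> k (ofInj \<pi> k b) = b" by (rule toInj_ofInj[OF \<pi> b])
    show "ofInj \<pi> k b \<in> {\<sigma>. \<sigma> permutes {..<k}} \<times> Qkn k n"
      using ofInj_props[OF \<pi> b] by (simp add: ofInj_def permutes_inv)
  qed
  finally show ?thesis by simp
qed



lemma first_part:
  fixes n k :: nat and chi :: "(nat \<Rightarrow> nat) \<Rightarrow> complex"
    and A :: "complex mat" and X :: "nat \<Rightarrow> complex mat"
  shows "Dk_immanant n chi k A X =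
           (\<Sum>\<sigma> | \<sigma> permutes {..<k}. \<Sum>\<alpha>\<in>Qkn k n. immanant n chi (replace_cols n A \<alpha> (\<lambda>j. X (\<sigma> j))))"
proof -
  let ?P = "{\<pi>. \<pi> permutes {..<n}}"
  have fP: "finite ?P" by (simp add: finite_permutations)
  have pin: "\<pi> i < n" if "\<pi> permutes {..<n}" "i < n" for \<pi> i using permutes_in_image[OF that(1)] that(2) by auto
  have F: "(\<lambda>t. immanant n chi (mat n n (\<lambda>(i,j). A $$ (i,j) + (\<Sum>l<k. t l * X l $$ (i,j))))) =
     (\<lambda>t. \<Sum>\<pi>\<in>?P. chi \<pi> * (\<Prod>i\<in>{..<n}. A $$ (i, \<pi> i) + (\<Sum>l<k. t l * X l $$ (i, \<pi> i))))"
    unfolding immanant_def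
    by (intro ext sum.cong refl arg_cong2[where f="(*)"] prod.cong) (auto simp: pin)
  have "Dk_immanant n chi k A X = (\<Sum>\<pi>\<in>?P. chi \<pi> * (\<Sum>g\<in>Inj {0..<k} {..<n}. (\<Prod>l\<in>{0..<k}. X l $$ (g l, \<pi> (g l))) *
            (\<Prod>i\<in>{..<n} - g`{0..<k}. A $$ (i, \<pi> i) + (\<Sum>l<k. 0 * X l $$ (i, \<pi> i)))))"
    unfolding Dk_immanant_def F
    by (subst foldr_partial[where P="?P" and I="{..<n}" and w=chi and p="\<lambda>\<pi> i. A $$ (i, \<pi> i)"
          and q="\<lambda>\<pi> i l. X l $$ (i, \<pi> i)"]) (auto simp: fP)
  also have "\<dots> = (\<Sum>\<pi>\<in>?P. chi \<pi> * (\<Sum>\<sigma> | \<sigma> permutes {..<k}. \<Sum>\<alpha>\<in>Qkn k n. \<Prod>i<n. replace_cols n A \<alpha> (\<lambda>j. X (\<sigma> j)) $$ (i, \<pi> i)))"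
    by (rule sum.cong[OF refl]) (simp add: sum_pi)
  also have "\<dots> = (\<Sum>\<pi>\<in>?P. \<Sum>\<sigma> | \<sigma> permutes {..<k}. \<Sum>\<alpha>\<in>Qkn k n. chi \<pi> * (\<Prod>i<n. replace_cols n A \<alpha> (\<lambda>j. X (\<sigma> j)) $$ (i, \<pi> i)))"
    by (simp add: sum_distrib_left)
  also have "\<dots> = (\<Sum>\<sigma> | \<sigma> permutes {..<k}. \<Sum>\<pi>\<in>?P. \<Sum>\<alpha>\<in>Qkn k n. chi \<pi> * (\<Prod>i<n. replace_cols n A \<alpha> (\<lambda>j. X (\<sigma> j)) $$ (i, \<pi> i)))"
    by (rule sum.swap)
  also have "\<dots> = (\<Sum>\<sigma> | \<sigma> permutes {..<k}. \<Sum>\<alpha>\<in>Qkn k n. \<Sum>\<pi>\<in>?P. chi \<pi> * (\<Prod>i<n. replace_cols n A \<alpha> (\<lambda>j. X (\<sigma> j)) $$ (i, \<pi> i)))"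
    by (rule sum.cong[OF refl], rule sum.swap)
  also have "\<dots> = (\<Sum>\<sigma> | \<sigma> permutes {..<k}. \<Sum>\<alpha>\<in>Qkn k n. immanant n chi (replace_cols n A \<alpha> (\<lambda>j. X (\<sigma> j))))"
    by (simp add: immanant_def)
  finally show ?thesis .
qed

theorem mainTheorem2:
  fixes n k :: nat and chi :: "(nat \<Rightarrow> nat) \<Rightarrow> complex"
    and A :: "complex mat" and X :: "nat \<Rightarrow> complex mat"
  assumes "n \<ge> 1" and "irreducible_character n chi"
    and "1 \<le> k" and "k \<le> n"
    and "A \<in> carrier_mat n n" and "\<forall>j<k. X j \<in> carrier_mat n n"
  shows "Dk_immanant n chi k A X =
           (\<Sum>\<sigma> | \<sigma> permutes {..<k}. \<Sum>\<alpha>\<in>Qkn k n. immanant n chi (replace_cols n A \<alpha> (\<lambda>j. X (\<sigma> j)))) \<and>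
         (\<forall>Y \<in> carrier_mat n n.
           Dk_immanant n chi k A (\<lambda>_. Y) =
           of_nat (fact k) * (\<Sum>\<alpha>\<in>Qkn k n. immanant n chi (replace_cols n A \<alpha> (\<lambda>_. Y))))"
proof (intro conjI ballI)
  show "Dk_immanant n chi k A X =
           (\<Sum>\<sigma> | \<sigma> permutes {..<k}. \<Sum>\<alpha>\<in>Qkn k n. immanant n chi (replace_cols n A \<alpha> (\<lambda>j. X (\<sigma> j))))"
    by (rule first_part)
  fix Y :: "complex mat"
  have c: "card {\<sigma>. \<sigma> permutes {..<k}} = fact k" by (rule card_permutations) auto
  show "Dk_immanant n chi k A (\<lambda>_. Y) =
           of_nat (fact k) * (\<Sum>\<alpha>\<in>Qkn k n. immanant n chi (replace_cols n A \<alpha> (\<lambda>_. Y)))"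
    using first_part[of n chi k A "\<lambda>_. Y"] c by simp
qed

end
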